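(* Let $A$ be a basic connected finite dimensional algebra over an algebraically closed field $k$ with ordinary quiver $Q$ without oriented cycles. Let $f\in\mathsf{HH}^1(A)$ be diagonal with respect to a basis $\mathcal B$ of $A$, and let $\nu\colon kQ\twoheadrightarrow A$ be a presentation adapted to $\mathcal B$, i.e. $\nu(\alpha)\in\mathcal B$ for every arrow $\alpha$ of $Q$. Then $f\in\mathsf{Im}(\theta_\nu)$.
   Context: Fix a complete set $e_1,\dots,e_n$ of primitive orthogonal idempotents of $A$ indexed by $Q_0=\{1,\dots,n\}$, $E=\bigoplus ke_i$, $\mathfrak r$ the radical. A presentation is a surjective algebra map $\nu\colon kQ\twoheadrightarrow A$ with admissible kernel ($(kQ^+)^N\subseteq\mathsf{Ker}\,\nu\subseteq(kQ^+)^2$ for some $N\ge2$, $kQ^+$ the arrow ideal) and $\nu(e_i)=e_i$. $\mathsf{HH}^1(A)=Der_0(A)/Int_0(A)$, with $Der_0(A)$ the derivations vanishing on all $e_i$ (commutator bracket) and $Int_0(A)=\{a\mapsto ea-ae\mid e\in E\}$. A basis of $A$ is a $k$-basis $\mathcal B\subseteq\bigcup_{i,j}e_jAe_i$ containing $e_1,\dots,e_n$ with its other elements in $\mathfrak r$; $f\in\mathsf{HH}^1(A)$ is diagonal with respect to $\mathcal B$ if a derivation representing $f$ is diagonal in $\mathcal B$. Walks: paths in $Q$ with formal inverse arrows allowed. For $I=\mathsf{Ker}\,\nu$, the homotopy relation $\sim_I$ is the smallest equivalence relation on walks with $\alpha\alpha^{-1}\sim_I e_y$, $\alpha^{-1}\alpha\sim_I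 e_x$ for arrows $\alpha\colon x\to y$, compatible with concatenation, and identifying two paths occurring with nonzero coefficient in a same minimal relation of $I$ (a nonzero $\sum t_iu_i\in I$, $t_i\neq0$, distinct paths, no nonempty proper subsum in $I$). $\pi_1(Q,I)$ is the group of classes of closed walks at a fixed vertex $x_0$. Fix a maximal tree $T$ of $Q$, $\gamma_x$ the minimal walk in $T$ from $x_0$ to $x$. For a group homomorphism $g\colon\pi_1(Q,I)\to k^+$, $\theta_\nu(g)$ is the class of the derivation $\tilde g$ with $\tilde g(\nu(u))=g([\gamma_y^{-1}u\gamma_x]_I)\nu(u)$ for paths $u$ from $x$ to $y$. *)

theory Defs
  imports "HOL-Algebra.Group" "HOL-Computational_Algebra.Polynomial"
begin

definition alg_closed_field :: "'k::field itself \<Rightarrow> bool" where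
  "alg_closed_field _ \<longleftrightarrow> (\<forall>p :: 'k poly. 0 < degree p \<longrightarrow> (\<exists>x. poly p x = 0))"

definition k_algebra :: "('k::field \<Rightarrow> 'a::ring_1 \<Rightarrow> 'a) \<Rightarrow> bool" where
  "k_algebra scale \<longleftrightarrow> vector_space scale \<and>
     (\<forall>c a b. scale c (a * b) = scale c a * b \<and> scale c (a * b) = a * scale c b)"

definition finite_dim_algebra :: "('k::field \<Rightarrow> 'a::ring_1 \<Rightarrow> 'a) \<Rightarrow> bool" where
  "finite_dim_algebra scale \<longleftrightarrow> k_algebra scale \<and>
     (\<exists>S. finite S \<and> module.span scale S = UNIV)"

definition connected_algebra :: "'a::ring_1 itself \<Rightarrow> bool" where
  "connected_algebra _ \<longleftrightarrow> (1::'a) \<noteq> 0 \<and>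
     (\<forall>c::'a. c * c = c \<and> (\<forall>a. c * a = a * c) \<longrightarrow> c = 0 \<or> c = 1)"

definition jrad :: "'a::ring_1 set" where
  "jrad = {a. \<forall>b. \<exists>c. c * (1 - b * a) = 1}"

definition primitive_idem :: "'a::ring_1 \<Rightarrow> bool" where
  "primitive_idem x \<longleftrightarrow> x \<noteq> 0 \<and> x * x = x \<and>
     (\<forall>p q. p * p = p \<and> q * q = q \<and> p * q = 0 \<and> q * p = 0 \<and> p + q = x \<longrightarrow> p = 0 \<or> q = 0)"

definition complete_prim_orth_idems :: "'v set \<Rightarrow> ('v \<Rightarrow> 'a::ring_1) \<Rightarrow> bool" where
  "complete_prim_orth_idems V e \<longleftrightarrow> finite V \<and> (\<forall>i\<in>V. primitive_idem (e i)) \<and>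
     (\<forall>i\<in>V. \<forall>j\<in>V. i \<noteq> j \<longrightarrow> e i * e j = 0) \<and> (\<Sum>i\<in>V. e i) = 1"

text \<open>A step of a walk is (arrow, True) (traversed forwards) or (arrow, False) (formal inverse).
  Walks are written in traversal order: (x, [s1, ..., sm]) starts at x and traverses s1 first.\<close>

definition sstart :: "('e \<Rightarrow> 'v) \<Rightarrow> ('e \<Rightarrow> 'v) \<Rightarrow> 'e \<times> bool \<Rightarrow> 'v" where
  "sstart src tgt s = (if snd s then src (fst s) else tgt (fst s))"

definition send :: "('e \<Rightarrow> 'v) \<Rightarrow> ('e \<Rightarrow> 'v) \<Rightarrow> 'e \<times> bool \<Rightarrow> 'v" where
  "send src tgt s = (if snd s then tgt (fst s) else src (fst s))"

fun steps_ok :: "('e \<Rightarrow> 'v) \<Rightarrow> ('e \<Rightarrow> 'v) \<Rightarrow> 'e set \<Rightarrow> 'v \<Rightarrow> ('e \<times> bool) list \<Rightarrow> bool" where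
  "steps_ok src tgt E x [] = True"
| "steps_ok src tgt E x (s # ss) =
     (fst s \<in> E \<and> sstart src tgt s = x \<and> steps_ok src tgt E (send src tgt s) ss)"

fun wend :: "('e \<Rightarrow> 'v) \<Rightarrow> ('e \<Rightarrow> 'v) \<Rightarrow> 'v \<Rightarrow> ('e \<times> bool) list \<Rightarrow> 'v" where
  "wend src tgt x [] = x"
| "wend src tgt x (s # ss) = wend src tgt (send src tgt s) ss"

definition walk :: "'v set \<Rightarrow> 'e set \<Rightarrow> ('e \<Rightarrow> 'v) \<Rightarrow> ('e \<Rightarrow> 'v) \<Rightarrow> 'v \<times> ('e \<times> bool) list \<Rightarrow> bool" where
  "walk V E src tgt w \<longleftrightarrow> fst w \<in> V \<and> steps_ok src tgt E (fst w) (snd w)"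

definition inv_steps :: "('e \<times> bool) list \<Rightarrow> ('e \<times> bool) list" where
  "inv_steps ss = rev (map (\<lambda>s. (fst s, \<not> snd s)) ss)"

text \<open>Paths (x, [a1,...,am]): start at x, a1 first. Trivial path (x, []) is e_x.\<close>
definition path_walk :: "'v \<times> 'e list \<Rightarrow> 'v \<times> ('e \<times> bool) list" where
  "path_walk u = (fst u, map (\<lambda>a. (a, True)) (snd u))"

definition is_path :: "'v set \<Rightarrow> 'e set \<Rightarrow> ('e \<Rightarrow> 'v) \<Rightarrow> ('e \<Rightarrow> 'v) \<Rightarrow> 'v \<times> 'e list \<Rightarrow> bool" where
  "is_path V E src tgt u \<longleftrightarrow> walk V E src tgt (path_walk u)"

definition no_oriented_cycles :: "'v set \<Rightarrow> 'e set \<Rightarrow> ('e \<Rightarrow> 'v) \<Rightarrow> ('e \<Rightarrow> 'v) \<Rightarrow> bool" where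
  "no_oriented_cycles V E src tgt \<longleftrightarrow>
     (\<forall>u. is_path V E src tgt u \<and> snd u \<noteq> [] \<longrightarrow>
        wend src tgt (fst u) (snd (path_walk u)) \<noteq> fst u)"

definition quiver :: "'v set \<Rightarrow> 'e set \<Rightarrow> ('e \<Rightarrow> 'v) \<Rightarrow> ('e \<Rightarrow> 'v) \<Rightarrow> bool" where
  "quiver V E src tgt \<longleftrightarrow> finite V \<and> finite E \<and> (\<forall>a\<in>E. src a \<in> V \<and> tgt a \<in> V)"

text \<open>An element of kQ is a finitely supported k-valued function on the paths of Q.
  An algebra map \<nu> : kQ \<rightarrow> A with \<nu>(e_i) = e_i is (by the universal property of kQ)
  the same as a choice of \<nu>(\<alpha>) \<in> e_t(\<alpha>) A e_s(\<alpha>) for every arrow \<alpha>; here nuA gives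
  these images and nu_path, nu_lin its extension to paths and to kQ.
  The path a1 ... am (a1 first) maps to \<nu>(am) \<dots> \<nu>(a1) e_x.\<close>

definition nu_path :: "('v \<Rightarrow> 'a::ring_1) \<Rightarrow> ('e \<Rightarrow> 'a) \<Rightarrow> 'v \<times> 'e list \<Rightarrow> 'a" where
  "nu_path e nuA u = foldl (\<lambda>acc a. nuA a * acc) (e (fst u)) (snd u)"

definition kQ_elem :: "'v set \<Rightarrow> 'e set \<Rightarrow> ('e \<Rightarrow> 'v) \<Rightarrow> ('e \<Rightarrow> 'v) \<Rightarrow> ('v \<times> 'e list \<Rightarrow> 'k::field) \<Rightarrow> bool" where
  "kQ_elem V E src tgt \<rho> \<longleftrightarrow> finite {u. \<rho> u \<noteq> 0} \<and> (\<forall>u. \<rho> u \<noteq> 0 \<longrightarrow> is_path V E src tgt u)"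

definition nu_lin :: "('k::field \<Rightarrow> 'a::ring_1 \<Rightarrow> 'a) \<Rightarrow> ('v \<Rightarrow> 'a) \<Rightarrow> ('e \<Rightarrow> 'a) \<Rightarrow> ('v \<times> 'e list \<Rightarrow> 'k) \<Rightarrow> 'a" where
  "nu_lin scale e nuA \<rho> = (\<Sum>u\<in>{u. \<rho> u \<noteq> 0}. scale (\<rho> u) (nu_path e nuA u))"

definition in_ker :: "'v set \<Rightarrow> 'e set \<Rightarrow> ('e \<Rightarrow> 'v) \<Rightarrow> ('e \<Rightarrow> 'v) \<Rightarrow> ('k::field \<Rightarrow> 'a::ring_1 \<Rightarrow> 'a) \<Rightarrow> ('v \<Rightarrow> 'a) \<Rightarrow> ('e \<Rightarrow> 'a) \<Rightarrow> ('v \<times> 'e list \<Rightarrow> 'k) \<Rightarrow> bool" where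
  "in_ker V E src tgt scale e nuA \<rho> \<longleftrightarrow> kQ_elem V E src tgt \<rho> \<and> nu_lin scale e nuA \<rho> = 0"

text \<open>Presentation: \<nu> is an algebra map kQ \<rightarrow> A with \<nu>(e_i) = e_i, surjective, with admissible
  kernel: (kQ^+)^N \<subseteq> Ker \<nu> (i.e. all paths of length \<ge> N, which span (kQ^+)^N, are killed)
  and Ker \<nu> \<subseteq> (kQ^+)^2 (i.e. elements of the kernel have no component on paths of length < 2).\<close>
definition presentation :: "'v set \<Rightarrow> 'e set \<Rightarrow> ('e \<Rightarrow> 'v) \<Rightarrow> ('e \<Rightarrow> 'v) \<Rightarrow> ('k::field \<Rightarrow> 'a::ring_1 \<Rightarrow> 'a) \<Rightarrow> ('v \<Rightarrow> 'a) \<Rightarrow> ('e \<Rightarrow> 'a) \<Rightarrow> bool" where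
  "presentation V E src tgt scale e nuA \<longleftrightarrow>
     (\<forall>a\<in>E. e (tgt a) * nuA a * e (src a) = nuA a) \<and>
     module.span scale (nu_path e nuA ` {u. is_path V E src tgt u}) = UNIV \<and>
     (\<exists>N\<ge>2. \<forall>u. is_path V E src tgt u \<and> length (snd u) \<ge> N \<longrightarrow> nu_path e nuA u = 0) \<and>
     (\<forall>\<rho>. in_ker V E src tgt scale e nuA \<rho> \<longrightarrow> (\<forall>u. length (snd u) < 2 \<longrightarrow> \<rho> u = 0))"

definition minimal_rel :: "'v set \<Rightarrow> 'e set \<Rightarrow> ('e \<Rightarrow> 'v) \<Rightarrow> ('e \<Rightarrow> 'v) \<Rightarrow> ('k::field \<Rightarrow> 'a::ring_1 \<Rightarrow> 'a) \<Rightarrow> ('v \<Rightarrow> 'a) \<Rightarrow> ('e \<Rightarrow> 'a) \<Rightarrow> ('v \<times> 'e list \<Rightarrow> 'k) \<Rightarrow> bool" where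
  "minimal_rel V E src tgt scale e nuA \<rho> \<longleftrightarrow>
     in_ker V E src tgt scale e nuA \<rho> \<and> (\<exists>u. \<rho> u \<noteq> 0) \<and>
     (\<forall>S. S \<noteq> {} \<and> S \<subset> {u. \<rho> u \<noteq> 0} \<longrightarrow>
        \<not> in_ker V E src tgt scale e nuA (\<lambda>u. if u \<in> S then \<rho> u else 0))"

inductive htpy :: "'v set \<Rightarrow> 'e set \<Rightarrow> ('e \<Rightarrow> 'v) \<Rightarrow> ('e \<Rightarrow> 'v) \<Rightarrow> ('k::field \<Rightarrow> 'a::ring_1 \<Rightarrow> 'a) \<Rightarrow> ('v \<Rightarrow> 'a) \<Rightarrow> ('e \<Rightarrow> 'a)
    \<Rightarrow> 'v \<times> ('e \<times> bool) list \<Rightarrow> 'v \<times> ('e \<times> bool) list \<Rightarrow> bool"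
  for V E src tgt scale e nuA where
  refl: "walk V E src tgt w \<Longrightarrow> htpy V E src tgt scale e nuA w w"
| sym: "htpy V E src tgt scale e nuA w w' \<Longrightarrow> htpy V E src tgt scale e nuA w' w"
| trans: "htpy V E src tgt scale e nuA w w' \<Longrightarrow> htpy V E src tgt scale e nuA w' w''
          \<Longrightarrow> htpy V E src tgt scale e nuA w w''"
| cancel_fwd: "a \<in> E \<Longrightarrow> htpy V E src tgt scale e nuA (src a, [(a, True), (a, False)]) (src a, [])"
| cancel_bwd: "a \<in> E \<Longrightarrow> htpy V E src tgt scale e nuA (tgt a, [(a, False), (a, True)]) (tgt a, [])"
| concat: "htpy V E src tgt scale e nuA (x, s1) (x, s1') \<Longrightarrow> htpy V E src tgt scale e nuA (y, s2) (y, s2')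
          \<Longrightarrow> wend src tgt x s1 = y \<Longrightarrow> wend src tgt x s1' = y
          \<Longrightarrow> htpy V E src tgt scale e nuA (x, s1 @ s2) (x, s1' @ s2')"
| minrel: "minimal_rel V E src tgt scale e nuA \<rho> \<Longrightarrow> \<rho> u \<noteq> 0 \<Longrightarrow> \<rho> u' \<noteq> 0
          \<Longrightarrow> htpy V E src tgt scale e nuA (path_walk u) (path_walk u')"

definition htpy_class where
  "htpy_class V E src tgt scale e nuA w = {w'. htpy V E src tgt scale e nuA w w'}"

definition pi1_carrier where
  "pi1_carrier V E src tgt scale e nuA x0 = {htpy_class V E src tgt scale e nuA (x0, ss) | ss.
                  walk V E src tgt (x0, ss) \<and> wend src tgt x0 ss = x0}"

definition pi1_mult where
  "pi1_mult V E src tgt scale e nuA x0 X Y = {w. \<exists>s1 s2. (x0, s1) \<in> X \<and> (x0, s2) \<in> Y \<and>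
                          htpy V E src tgt scale e nuA (x0, s1 @ s2) w}"

definition pi1 :: "'v set \<Rightarrow> 'e set \<Rightarrow> ('e \<Rightarrow> 'v) \<Rightarrow> ('e \<Rightarrow> 'v) \<Rightarrow> ('k::field \<Rightarrow> 'a::ring_1 \<Rightarrow> 'a) \<Rightarrow> ('v \<Rightarrow> 'a) \<Rightarrow> ('e \<Rightarrow> 'a)
    \<Rightarrow> 'v \<Rightarrow> ('v \<times> ('e \<times> bool) list) set monoid" where
  "pi1 V E src tgt scale e nuA x0 =
    \<lparr> carrier = pi1_carrier V E src tgt scale e nuA x0,
      monoid.mult = pi1_mult V E src tgt scale e nuA x0,
      one = htpy_class V E src tgt scale e nuA (x0, []) \<rparr>"

definition additive_group :: "'k::field itself \<Rightarrow> 'k monoid" where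
  "additive_group _ = \<lparr> carrier = UNIV, monoid.mult = (+), one = 0 \<rparr>"

definition reduced_steps :: "('e \<times> bool) list \<Rightarrow> bool" where
  "reduced_steps ss \<longleftrightarrow> (\<forall>i. Suc i < length ss \<longrightarrow>
      \<not> (fst (ss ! i) = fst (ss ! Suc i) \<and> snd (ss ! i) \<noteq> snd (ss ! Suc i)))"

definition maximal_tree :: "'v set \<Rightarrow> 'e set \<Rightarrow> ('e \<Rightarrow> 'v) \<Rightarrow> ('e \<Rightarrow> 'v) \<Rightarrow> 'e set \<Rightarrow> bool" where
  "maximal_tree V E src tgt T \<longleftrightarrow> T \<subseteq> E \<and>
     (\<forall>x\<in>V. \<forall>y\<in>V. \<exists>ss. steps_ok src tgt T x ss \<and> wend src tgt x ss = y) \<and>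
     (\<forall>x\<in>V. \<forall>ss. steps_ok src tgt T x ss \<and> wend src tgt x ss = x \<and> ss \<noteq> [] \<longrightarrow> \<not> reduced_steps ss)"

definition gamma :: "('e \<Rightarrow> 'v) \<Rightarrow> ('e \<Rightarrow> 'v) \<Rightarrow> 'e set \<Rightarrow> 'v \<Rightarrow> 'v \<Rightarrow> ('e \<times> bool) list" where
  "gamma src tgt T x0 x = (SOME ss. steps_ok src tgt T x0 ss \<and> wend src tgt x0 ss = x \<and>
       (\<forall>ss'. steps_ok src tgt T x0 ss' \<and> wend src tgt x0 ss' = x \<longrightarrow> length ss \<le> length ss'))"

text \<open>The closed walk \<gamma>_y^{-1} u \<gamma>_x (traversal order: \<gamma>_x, then u, then \<gamma>_y^{-1}).\<close>
definition loop_of_path where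
  "loop_of_path src tgt T x0 u =
     (x0, gamma src tgt T x0 (fst u) @ snd (path_walk u) @
          inv_steps (gamma src tgt T x0 (wend src tgt (fst u) (snd (path_walk u)))))"

definition Der0 :: "('k::field \<Rightarrow> 'a::ring_1 \<Rightarrow> 'a) \<Rightarrow> 'v set \<Rightarrow> ('v \<Rightarrow> 'a) \<Rightarrow> ('a \<Rightarrow> 'a) \<Rightarrow> bool" where
  "Der0 scale V e D \<longleftrightarrow> Vector_Spaces.linear scale scale D \<and> (\<forall>a b. D (a * b) = D a * b + a * D b) \<and>
     (\<forall>i\<in>V. D (e i) = 0)"

text \<open>D and D' define the same class in HH^1(A) = Der_0(A)/Int_0(A).\<close>
definition same_HH1_class :: "('k::field \<Rightarrow> 'a::ring_1 \<Rightarrow> 'a) \<Rightarrow> 'v set \<Rightarrow> ('v \<Rightarrow> 'a) \<Rightarrow> ('a \<Rightarrow> 'a) \<Rightarrow> ('a \<Rightarrow> 'a) \<Rightarrow> bool" where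
  "same_HH1_class scale V e D D' \<longleftrightarrow>
     (\<exists>c :: 'v \<Rightarrow> 'k. \<forall>a. D a - D' a =
        (\<Sum>i\<in>V. scale (c i) (e i)) * a - a * (\<Sum>i\<in>V. scale (c i) (e i)))"

definition paper_basis :: "('k::field \<Rightarrow> 'a::ring_1 \<Rightarrow> 'a) \<Rightarrow> 'v set \<Rightarrow> ('v \<Rightarrow> 'a) \<Rightarrow> 'a set \<Rightarrow> bool" where
  "paper_basis scale V e B \<longleftrightarrow>
     \<not> module.dependent scale B \<and> module.span scale B = UNIV \<and>
     (\<forall>b\<in>B. \<exists>i\<in>V. \<exists>j\<in>V. b = e j * b * e i) \<and>
     e ` V \<subseteq> B \<and> B - e ` V \<subseteq> jrad"

definition diagonal_wrt :: "('k::field \<Rightarrow> 'a::ring_1 \<Rightarrow> 'a) \<Rightarrow> 'a set \<Rightarrow> ('a \<Rightarrow> 'a) \<Rightarrow> bool" where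
  "diagonal_wrt scale B D \<longleftrightarrow> (\<forall>b\<in>B. \<exists>c. D b = scale c b)"

text \<open>f (the class of D) lies in the image of \<theta>_\<nu>: there is a group homomorphism
  g : \<pi>_1(Q,I) \<rightarrow> k^+ whose associated derivation g~ has the class of D.\<close>
definition in_image_theta :: "'v set \<Rightarrow> 'e set \<Rightarrow> ('e \<Rightarrow> 'v) \<Rightarrow> ('e \<Rightarrow> 'v) \<Rightarrow> ('k::field \<Rightarrow> 'a::ring_1 \<Rightarrow> 'a) \<Rightarrow> ('v \<Rightarrow> 'a) \<Rightarrow> ('e \<Rightarrow> 'a)
    \<Rightarrow> 'e set \<Rightarrow> 'v \<Rightarrow> ('a \<Rightarrow> 'a) \<Rightarrow> bool" where
  "in_image_theta V E src tgt scale e nuA T x0 D \<longleftrightarrow>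
     (\<exists>g \<in> hom (pi1 V E src tgt scale e nuA x0) (additive_group TYPE('k)).
      \<exists>D'. Der0 scale V e D' \<and>
        (\<forall>u. is_path V E src tgt u \<longrightarrow>
           D' (nu_path e nuA u) =
             scale (g (htpy_class V E src tgt scale e nuA (loop_of_path src tgt T x0 u))) (nu_path e nuA u)) \<and>
        same_HH1_class scale V e D D')"

end

theory Submission
  imports Defs
begin

lemma eig_split:
  fixes scale :: "'k::field \<Rightarrow> 'a::ab_group_add \<Rightarrow> 'a"
  assumes vs: "vector_space scale" and lin: "Vector_Spaces.linear scale scale D"
  shows "finite F \<Longrightarrow> (\<forall>p\<in>F. D (v p) = scale (lam p) (v p)) \<Longrightarrow> sum v F = 0
     \<Longrightarrow> sum v {p\<in>F. lam p = \<mu>} = 0"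
proof (induction "card (lam ` F)" arbitrary: F v rule: less_induct)
  case (less F v)
  interpret vector_space scale by (rule vs)
  interpret L: module_hom scale scale D using lin by (simp add: module_hom_iff_linear)
  show ?case
  proof (cases "lam ` F \<subseteq> {\<mu>}")
    case True
    then have "{p\<in>F. lam p = \<mu>} = F" by auto
    then show ?thesis using less by simp
  next
    case False
    then obtain q where q: "q \<in> F" "lam q \<noteq> \<mu>" by auto
    define nu where "nu = lam q"
    define v' where "v' p = scale (lam p - nu) (v p)" for p
    define F' where "F' = {p\<in>F. lam p \<noteq> nu}"
    have fF': "finite F'" using less(2) by (simp add: F'_def)
    have "lam ` F' \<subseteq> lam ` F - {nu}" by (auto simp: F'_def)
    moreover have "nu \<in> lam ` F" using q by (simp add: nu_def)
    ultimately have cardlt: "card (lam ` F') < card (lam ` F)"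
      using less(2) by (metis card_Diff1_less_iff card_mono finite_Diff finite_imageI le_less_trans)
    have e1: "\<forall>p\<in>F'. D (v' p) = scale (lam p) (v' p)"
      using less(3) by (auto simp: v'_def F'_def L.scale scale_left_commute)
    have "sum v' F' = sum v' F"
      by (rule sum.mono_neutral_left) (auto simp: F'_def v'_def less(2))
    also have "\<dots> = (\<Sum>p\<in>F. D (v p) - scale nu (v p))"
      using less(3) by (intro sum.cong) (auto simp: v'_def scale_left_diff_distrib)
    also have "\<dots> = D (sum v F) - scale nu (sum v F)"
      by (simp add: L.sum sum_subtractf scale_sum_right)
    also have "\<dots> = 0" using less(4) by simp
    finally have e2: "sum v' F' = 0" .
    have "sum v' {p\<in>F'. lam p = \<mu>} = 0"
      using less(1)[OF cardlt fF' e1 e2] .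
    moreover have "{p\<in>F'. lam p = \<mu>} = {p\<in>F. lam p = \<mu>}"
      using q by (auto simp: F'_def nu_def)
    moreover have "sum v' {p\<in>F. lam p = \<mu>} = scale (\<mu> - nu) (sum v {p\<in>F. lam p = \<mu>})"
      by (simp add: v'_def scale_sum_right)
    moreover have "\<mu> - nu \<noteq> 0" using q by (simp add: nu_def)
    ultimately show ?thesis by simp
  qed
qed


lemma steps_ok_append[simp]:
  "steps_ok src tgt E x (s1 @ s2) \<longleftrightarrow> steps_ok src tgt E x s1 \<and> steps_ok src tgt E (wend src tgt x s1) s2"
  by (induction s1 arbitrary: x) auto

lemma wend_append[simp]: "wend src tgt x (s1 @ s2) = wend src tgt (wend src tgt x s1) s2"
  by (induction s1 arbitrary: x) auto

lemma steps_ok_mono: "T \<subseteq> E \<Longrightarrow> steps_ok src tgt T x ss \<Longrightarrow> steps_ok src tgt E x ss"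
  by (induction ss arbitrary: x) auto

lemma inv_steps_Nil[simp]: "inv_steps [] = []"
  by (simp add: inv_steps_def)

lemma inv_steps_Cons[simp]: "inv_steps (s # ss) = inv_steps ss @ [(fst s, \<not> snd s)]"
  by (simp add: inv_steps_def)

lemma steps_ok_inv:
  "steps_ok src tgt E x ss \<Longrightarrow> steps_ok src tgt E (wend src tgt x ss) (inv_steps ss) \<and>
     wend src tgt (wend src tgt x ss) (inv_steps ss) = x"
  apply (induction ss arbitrary: x) apply simp apply (simp add: sstart_def send_def)
  done

definition stepw :: "('e \<Rightarrow> 'k::ab_group_add) \<Rightarrow> 'e \<times> bool \<Rightarrow> 'k" where
  "stepw c s = (if snd s then c (fst s) else - c (fst s))"

definition wt :: "('e \<Rightarrow> 'k::ab_group_add) \<Rightarrow> ('e \<times> bool) list \<Rightarrow> 'k" where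
  "wt c ss = sum_list (map (stepw c) ss)"

lemma wt_Nil[simp]: "wt c [] = 0" by (simp add: wt_def)
lemma wt_append[simp]: "wt c (s1 @ s2) = wt c s1 + wt c s2" by (simp add: wt_def)
lemma wt_Cons[simp]: "wt c (s # ss) = stepw c s + wt c ss" by (simp add: wt_def)
lemma wt_inv[simp]: "wt c (inv_steps ss) = - wt c ss"
  by (induction ss) (auto simp: stepw_def)
lemma wt_snoc_path: "wt c (map (\<lambda>a. (a, True)) (as @ [a])) = wt c (map (\<lambda>a. (a, True)) as) + c a"
  by (simp add: stepw_def)

lemma htpy_wt:
  assumes mr: "\<And>\<rho> u u'. minimal_rel V E src tgt scale e nuA \<rho> \<Longrightarrow> \<rho> u \<noteq> 0 \<Longrightarrow> \<rho> u' \<noteq> 0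
      \<Longrightarrow> wt c (snd (path_walk u)) = wt c (snd (path_walk u'))"
  shows "htpy V E src tgt scale e nuA w w' \<Longrightarrow> wt c (snd w) = wt c (snd w')"
proof (induction rule: htpy.induct)
  case (cancel_fwd a) then show ?case by (simp add: stepw_def)
next
  case (cancel_bwd a) then show ?case by (simp add: stepw_def)
next
  case (concat x s1 s1' y s2 s2') then show ?case by simp
next
  case (minrel \<rho> u u') then show ?case using mr by blast
qed simp_all

lemma nu_path_snoc: "nu_path e nuA (x, as @ [a]) = nuA a * nu_path e nuA (x, as)"
  by (simp add: nu_path_def)

lemma path_props:
  fixes scale :: "'k::field \<Rightarrow> 'a::ring_1 \<Rightarrow> 'a"
  assumes vs: "vector_space scale"
    and kalg: "\<forall>c a b. scale c (a * b) = scale c a * b \<and> scale c (a * b) = a * scale c b"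
    and der: "\<forall>a b. D (a * b) = D a * b + a * D b"
    and De: "\<forall>i\<in>V. D (e i) = 0"
    and idem: "\<forall>i\<in>V. e i * e i = e i"
    and pres: "\<forall>a\<in>E. e (tgt a) * nuA a * e (src a) = nuA a"
    and Dc: "\<forall>a\<in>E. D (nuA a) = scale (c a) (nuA a)"
    and quiv: "\<forall>a\<in>E. tgt a \<in> V"
  shows "x \<in> V \<Longrightarrow> steps_ok src tgt E x (map (\<lambda>a. (a, True)) as) \<Longrightarrow>
     D (nu_path e nuA (x, as)) = scale (wt c (map (\<lambda>a. (a, True)) as)) (nu_path e nuA (x, as)) \<and>
     e (wend src tgt x (map (\<lambda>a. (a, True)) as)) * nu_path e nuA (x, as) = nu_path e nuA (x, as) \<and>
     nu_path e nuA (x, as) * e x = nu_path e nuA (x, as) \<and>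
     wend src tgt x (map (\<lambda>a. (a, True)) as) \<in> V"
proof (induction as rule: rev_induct)
  case Nil
  interpret vector_space scale by (rule vs)
  from Nil show ?case using De idem by (simp add: nu_path_def)
next
  case (snoc a as)
  interpret vector_space scale by (rule vs)
  let ?n = "nu_path e nuA (x, as)"
  let ?w = "wend src tgt x (map (\<lambda>a. (a, True)) as)"
  have st: "steps_ok src tgt E x (map (\<lambda>a. (a, True)) as)" and aE: "a \<in> E" and sa: "src a = ?w"
    using snoc.prems by (auto simp: sstart_def)
  have IH: "D ?n = scale (wt c (map (\<lambda>a. (a, True)) as)) ?n" "e ?w * ?n = ?n" "?n * e x = ?n" "?w \<in> V"
    using snoc.IH[OF snoc.prems(1) st] by auto
  have wend': "wend src tgt x (map (\<lambda>a. (a, True)) (as @ [a])) = tgt a"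
    by (simp add: send_def)
  have tV: "tgt a \<in> V" using quiv aE by auto
  have sV: "src a \<in> V" using IH(4) sa by simp
  have na: "nuA a = e (tgt a) * nuA a * e (src a)" using pres aE by auto
  have ena: "e (tgt a) * nuA a = nuA a"
    by (metis na idem tV mult.assoc)
  have nae: "nuA a * e (src a) = nuA a"
    by (metis na idem sV mult.assoc)
  have "D (nuA a * ?n) = scale (c a) (nuA a) * ?n + nuA a * scale (wt c (map (\<lambda>a. (a, True)) as)) ?n"
    using der Dc aE IH(1) by simp
  also have "\<dots> = scale (wt c (map (\<lambda>a. (a, True)) as) + c a) (nuA a * ?n)"
  proof -
    have k1: "scale r (p * q) = scale r p * q" for r p q
      using kalg by blast
    have k2: "scale r (p * q) = p * scale r q" for r p q
      using kalg by blast
    show ?thesis by (simp only: k1[symmetric] k2[symmetric] scale_left_distrib add.commute)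
  qed
  finally have d: "D (nuA a * ?n) = scale (wt c (map (\<lambda>a. (a, True)) as) + c a) (nuA a * ?n)" .
  have "nuA a * ?n = nuA a * (e ?w * ?n)" using IH(2) by simp
  have e2: "nuA a * ?n * e x = nuA a * ?n" using IH(3) by (simp add: mult.assoc)
  show ?case
    using d e2 tV ena by (simp add: nu_path_snoc send_def stepw_def mult.assoc[symmetric])
qed


theorem lemma2p5:
  fixes scale :: "'k::field \<Rightarrow> 'a::ring_1 \<Rightarrow> 'a"
    and V :: "'v set" and E :: "'e set" and src tgt :: "'e \<Rightarrow> 'v"
    and e :: "'v \<Rightarrow> 'a" and nuA :: "'e \<Rightarrow> 'a"
    and B :: "'a set" and D :: "'a \<Rightarrow> 'a" and T :: "'e set" and x0 :: 'v
  assumes "alg_closed_field TYPE('k)"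
    and "finite_dim_algebra scale"
    and "connected_algebra TYPE('a)"
    and "complete_prim_orth_idems V e"
    and "quiver V E src tgt"
    and "no_oriented_cycles V E src tgt"
    and "presentation V E src tgt scale e nuA"
    and "paper_basis scale V e B"
    and "\<forall>a\<in>E. nuA a \<in> B"
    and "Der0 scale V e D"
    and "diagonal_wrt scale B D"
    and "maximal_tree V E src tgt T"
    and "x0 \<in> V"
  shows "in_image_theta V E src tgt scale e nuA T x0 D"
proof -
  have vs: "vector_space scale" and kalg: "\<forall>c a b. scale c (a * b) = scale c a * b \<and> scale c (a * b) = a * scale c b"
    using assms(2) unfolding finite_dim_algebra_def k_algebra_def by blast+
  interpret vector_space scale by (rule vs)
  have k1: "scale r (p * q) = scale r p * q" for r p q
    using kalg by blast
  have k2: "scale r (p * q) = p * scale r q" for r p q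
    using kalg by blast
  have linD: "Vector_Spaces.linear scale scale D" and der: "\<forall>a b. D (a * b) = D a * b + a * D b"
    and De: "\<forall>i\<in>V. D (e i) = 0" using assms(10) by (auto simp: Der0_def)
  interpret L: module_hom scale scale D using linD by (simp add: module_hom_iff_linear)
  have fV: "finite V" and idem: "\<forall>i\<in>V. e i * e i = e i" and orth: "\<forall>i\<in>V. \<forall>j\<in>V. i \<noteq> j \<longrightarrow> e i * e j = 0"
    using assms(4) by (auto simp: complete_prim_orth_idems_def primitive_idem_def)
  have quiv: "\<forall>a\<in>E. tgt a \<in> V" using assms(5) by (auto simp: quiver_def)
  have pres: "\<forall>a\<in>E. e (tgt a) * nuA a * e (src a) = nuA a" using assms(7) by (simp add: presentation_def)
  define c where "c a = (SOME r. D (nuA a) = scale r (nuA a))" for a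
  have Dc: "\<forall>a\<in>E. D (nuA a) = scale (c a) (nuA a)"
  proof
    fix a assume "a \<in> E"
    then have "\<exists>r. D (nuA a) = scale r (nuA a)" using assms(9,11) by (auto simp: diagonal_wrt_def)
    then show "D (nuA a) = scale (c a) (nuA a)" unfolding c_def by (rule someI_ex)
  qed
  define W where "W p = wt c (snd (path_walk p))" for p :: "'v \<times> 'e list"
  have PP: "D (nu_path e nuA p) = scale (W p) (nu_path e nuA p) \<and>
     e (wend src tgt (fst p) (snd (path_walk p))) * nu_path e nuA p = nu_path e nuA p \<and>
     nu_path e nuA p * e (fst p) = nu_path e nuA p \<and> wend src tgt (fst p) (snd (path_walk p)) \<in> V"
    if "is_path V E src tgt p" for p
  proof -
    from that have "fst p \<in> V" "steps_ok src tgt E (fst p) (map (\<lambda>a. (a, True)) (snd p))"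
      by (auto simp: is_path_def walk_def path_walk_def)
    from path_props[OF vs kalg der De idem pres Dc quiv this] show ?thesis
      by (cases p) (simp add: W_def path_walk_def)
  qed
  have mr: "W u = W u'" if m: "minimal_rel V E src tgt scale e nuA \<rho>" and u: "\<rho> u \<noteq> 0" and u': "\<rho> u' \<noteq> 0" for \<rho> u u'
  proof -
    define F where "F = {p. \<rho> p \<noteq> 0}"
    have ker: "in_ker V E src tgt scale e nuA \<rho>" using m by (simp add: minimal_rel_def)
    then have fF: "finite F" and paths: "\<forall>p\<in>F. is_path V E src tgt p" and s0: "nu_lin scale e nuA \<rho> = 0"
      by (auto simp: in_ker_def kQ_elem_def F_def)
    define v where "v p = scale (\<rho> p) (nu_path e nuA p)" for p
    have ev: "\<forall>p\<in>F. D (v p) = scale (W p) (v p)"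
      using PP paths by (auto simp: v_def L.scale scale_left_commute)
    have "sum v F = 0" using s0 by (simp add: nu_lin_def v_def F_def)
    from eig_split[OF vs linD fF ev this] have S0: "sum v {p\<in>F. W p = W u} = 0" .
    define S where "S = {p\<in>F. W p = W u}"
    have SF: "S \<subseteq> F" by (auto simp: S_def)
    have "in_ker V E src tgt scale e nuA (\<lambda>p. if p \<in> S then \<rho> p else 0)"
    proof -
      have sup: "{p. (if p \<in> S then \<rho> p else 0) \<noteq> 0} = S" by (auto simp: S_def F_def)
      have "(\<Sum>p\<in>S. scale (if p \<in> S then \<rho> p else 0) (nu_path e nuA p)) = sum v S"
        by (rule sum.cong) (auto simp: v_def)
      also have "\<dots> = 0" using S0 by (simp add: S_def)
      finally show ?thesis unfolding in_ker_def kQ_elem_def nu_lin_def sup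
        using fF paths SF finite_subset[OF SF fF] by (auto simp: F_def split: if_splits)
    qed
    moreover have "u \<in> S" using u by (simp add: S_def F_def)
    then have "S \<noteq> {}" by blast
    ultimately have "\<not> S \<subset> F" using m unfolding minimal_rel_def F_def by blast
    with SF have "S = F" by blast
    moreover have "u' \<in> F" using u' by (simp add: F_def)
    ultimately have "u' \<in> S" by simp
    then show ?thesis by (simp add: S_def)
  qed
  have hw: "wt c (snd w) = wt c (snd w')" if "htpy V E src tgt scale e nuA w w'" for w w'
  proof (rule htpy_wt[of V E src tgt scale e nuA c, OF _ that])
    fix \<rho> u u' assume "minimal_rel V E src tgt scale e nuA \<rho>" "\<rho> u \<noteq> 0" "\<rho> u' \<noteq> 0"
    from mr[OF this] show "wt c (snd (path_walk u)) = wt c (snd (path_walk u'))" by (simp add: W_def)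
  qed
  define g where "g X = wt c (snd (SOME w. w \<in> X))" for X :: "('v \<times> ('e \<times> bool) list) set"
  have gcl: "g (htpy_class V E src tgt scale e nuA w) = wt c (snd w)" if "walk V E src tgt w" for w
  proof -
    from that have "w \<in> htpy_class V E src tgt scale e nuA w" by (simp add: htpy_class_def htpy.refl)
    then have "(SOME w'. w' \<in> htpy_class V E src tgt scale e nuA w) \<in> htpy_class V E src tgt scale e nuA w"
      by (rule someI)
    then show ?thesis using hw by (simp add: g_def htpy_class_def)
  qed
  have ghom: "g \<in> hom (pi1 V E src tgt scale e nuA x0) (additive_group TYPE('k))"
  proof (rule homI)
    fix X show "g X \<in> carrier (additive_group TYPE('k))" by (simp add: additive_group_def)
  next
    fix X Y assume X: "X \<in> carrier (pi1 V E src tgt scale e nuA x0)" and Y: "Y \<in> carrier (pi1 V E src tgt scale e nuA x0)"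
    obtain ss1 where X1: "X = htpy_class V E src tgt scale e nuA (x0, ss1)" "walk V E src tgt (x0, ss1)" "wend src tgt x0 ss1 = x0"
      using X by (auto simp: pi1_def pi1_carrier_def)
    obtain ss2 where Y1: "Y = htpy_class V E src tgt scale e nuA (x0, ss2)" "walk V E src tgt (x0, ss2)" "wend src tgt x0 ss2 = x0"
      using Y by (auto simp: pi1_def pi1_carrier_def)
    define P where "P = pi1_mult V E src tgt scale e nuA x0 X Y"
    have allP: "wt c (snd w) = wt c ss1 + wt c ss2" if "w \<in> P" for w
    proof -
      from that obtain s1 s2 where "(x0, s1) \<in> X" "(x0, s2) \<in> Y" "htpy V E src tgt scale e nuA (x0, s1 @ s2) w"
        by (auto simp: P_def pi1_mult_def)
      then have "htpy V E src tgt scale e nuA (x0, ss1) (x0, s1)" "htpy V E src tgt scale e nuA (x0, ss2) (x0, s2)"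
        "wt c (s1 @ s2) = wt c (snd w)"
        using X1 Y1 hw[of "(x0, s1 @ s2)" w] by (auto simp: htpy_class_def)
      then show ?thesis using hw[of "(x0, ss1)" "(x0, s1)"] hw[of "(x0, ss2)" "(x0, s2)"] by simp
    qed
    have "htpy V E src tgt scale e nuA (x0, ss1 @ ss2) (x0, ss1 @ ss2)"
      by (rule htpy.concat[OF htpy.refl[OF X1(2)] htpy.refl[OF Y1(2)] X1(3) X1(3)])
    then have "(x0, ss1 @ ss2) \<in> P"
      unfolding P_def pi1_mult_def using X1 Y1 by (auto simp: htpy_class_def intro: htpy.refl)
    then have "(SOME w. w \<in> P) \<in> P" by (rule someI)
    then have "g P = wt c ss1 + wt c ss2" using allP by (simp add: g_def)
    moreover have "g X = wt c ss1" "g Y = wt c ss2" using gcl X1 Y1 by auto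
    ultimately show "g (X \<otimes>\<^bsub>pi1 V E src tgt scale e nuA x0\<^esub> Y) = g X \<otimes>\<^bsub>additive_group TYPE('k)\<^esub> g Y"
      by (simp add: P_def pi1_def additive_group_def)
  qed
  have TE: "T \<subseteq> E" using assms(12) by (simp add: maximal_tree_def)
  have gam: "steps_ok src tgt E x0 (gamma src tgt T x0 x) \<and> wend src tgt x0 (gamma src tgt T x0 x) = x"
    if xV: "x \<in> V" for x
  proof -
    obtain ss where "steps_ok src tgt T x0 ss \<and> wend src tgt x0 ss = x"
      using assms(12,13) xV unfolding maximal_tree_def by blast
    then have "\<exists>ss. (steps_ok src tgt T x0 ss \<and> wend src tgt x0 ss = x) \<and>
        (\<forall>ss'. steps_ok src tgt T x0 ss' \<and> wend src tgt x0 ss' = x \<longrightarrow> length ss \<le> length ss')"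
      by (rule ex_has_least_nat)
    then have "\<exists>ss. steps_ok src tgt T x0 ss \<and> wend src tgt x0 ss = x \<and>
        (\<forall>ss'. steps_ok src tgt T x0 ss' \<and> wend src tgt x0 ss' = x \<longrightarrow> length ss \<le> length ss')"
      by blast
    from someI_ex[OF this] have "steps_ok src tgt T x0 (gamma src tgt T x0 x) \<and> wend src tgt x0 (gamma src tgt T x0 x) = x"
      unfolding gamma_def by blast
    then show ?thesis using steps_ok_mono[OF TE, of src tgt x0 "gamma src tgt T x0 x"] by simp
  qed
  define h where "h i = wt c (gamma src tgt T x0 i)" for i
  define z where "z = (\<Sum>i\<in>V. scale (h i) (e i))"
  define D' where "D' a = D a - (z * a - a * z)" for a
  have zl: "z * (e i * a) = scale (h i) (e i * a)" if iV: "i \<in> V" for i a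
  proof -
    have "z * (e i * a) = (\<Sum>j\<in>V. scale (h j) (e j * e i * a))"
      by (simp add: z_def sum_distrib_right k1 mult.assoc)
    also have "\<dots> = scale (h i) (e i * e i * a) + (\<Sum>j\<in>V - {i}. scale (h j) (e j * e i * a))"
      using fV iV by (simp add: sum.remove)
    also have "(\<Sum>j\<in>V - {i}. scale (h j) (e j * e i * a)) = 0"
      using orth iV by (intro sum.neutral) auto
    finally show ?thesis using idem iV by simp
  qed
  have zr: "(a * e i) * z = scale (h i) (a * e i)" if iV: "i \<in> V" for i a
  proof -
    have "(a * e i) * z = (\<Sum>j\<in>V. scale (h j) (a * (e i * e j)))"
      by (simp add: z_def sum_distrib_left k2 mult.assoc)
    also have "\<dots> = scale (h i) (a * (e i * e i)) + (\<Sum>j\<in>V - {i}. scale (h j) (a * (e i * e j)))"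
      using fV iV by (simp add: sum.remove)
    also have "(\<Sum>j\<in>V - {i}. scale (h j) (a * (e i * e j))) = 0"
      using orth iV by (intro sum.neutral) auto
    finally show ?thesis using idem iV by simp
  qed
  have lin': "Vector_Spaces.linear scale scale D'"
  proof -
    have "module_hom scale scale D'"
      unfolding module_hom_iff
    proof (intro conjI allI)
      show "module scale" using vs by (simp add: module_iff_vector_space)
      show "module scale" using vs by (simp add: module_iff_vector_space)
      fix x y show "D' (x + y) = D' x + D' y"
        by (simp add: D'_def L.add algebra_simps)
    next
      fix r x show "D' (scale r x) = scale r (D' x)"
        by (simp add: D'_def L.scale k1[symmetric] k2[symmetric] scale_right_diff_distrib)
    qed
    then show ?thesis by (simp add: module_hom_iff_linear)
  qed
  have Der': "Der0 scale V e D'"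
    unfolding Der0_def
  proof (intro conjI ballI allI lin')
    fix a b show "D' (a * b) = D' a * b + a * D' b"
      using der by (simp add: D'_def algebra_simps)
  next
    fix i assume iV: "i \<in> V"
    show "D' (e i) = 0" using zl[OF iV, of 1] zr[OF iV, of 1] De iV by (simp add: D'_def)
  qed
  have pathf: "D' (nu_path e nuA u) =
     scale (g (htpy_class V E src tgt scale e nuA (loop_of_path src tgt T x0 u))) (nu_path e nuA u)"
    if up: "is_path V E src tgt u" for u
  proof -
    let ?x = "fst u" and ?y = "wend src tgt (fst u) (snd (path_walk u))" and ?n = "nu_path e nuA u"
    have P: "D ?n = scale (W u) ?n" "e ?y * ?n = ?n" "?n * e ?x = ?n" "?y \<in> V"
      using PP[OF up] by auto
    have xV: "?x \<in> V" and stu: "steps_ok src tgt E ?x (snd (path_walk u))"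
      using up by (auto simp: is_path_def walk_def path_walk_def)
    have "z * ?n = scale (h ?y) ?n" using zl[OF P(4), of ?n] P(2) by simp
    moreover have "?n * z = scale (h ?x) ?n" using zr[OF xV, of ?n] P(3) by simp
    ultimately have d': "D' ?n = scale (h ?x + W u + - h ?y) ?n"
      using P(1) by (simp add: D'_def algebra_simps scale_left_distrib scale_left_diff_distrib)
    have g1: "steps_ok src tgt E x0 (gamma src tgt T x0 ?x)" "wend src tgt x0 (gamma src tgt T x0 ?x) = ?x"
      using gam[OF xV] by auto
    have g2: "steps_ok src tgt E x0 (gamma src tgt T x0 ?y)" "wend src tgt x0 (gamma src tgt T x0 ?y) = ?y"
      using gam[OF P(4)] by auto
    have "steps_ok src tgt E ?y (inv_steps (gamma src tgt T x0 ?y))"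
      using steps_ok_inv[OF g2(1)] g2(2) by simp
    then have wl: "walk V E src tgt (loop_of_path src tgt T x0 u)"
      using g1 stu assms(13) by (simp add: loop_of_path_def walk_def)
    have "g (htpy_class V E src tgt scale e nuA (loop_of_path src tgt T x0 u)) = h ?x + W u + - h ?y"
      using gcl[OF wl] by (simp add: loop_of_path_def h_def W_def)
    then show ?thesis using d' by simp
  qed
  have same: "same_HH1_class scale V e D D'"
    unfolding same_HH1_class_def by (rule exI[of _ h]) (simp add: D'_def z_def)
  show ?thesis
    unfolding in_image_theta_def using ghom Der' pathf same by blast
qed

end
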